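(* Let $\mathbb{K}$ be a field of characteristic zero, $\delta\in\mathbb{K}$, and $\lambda$ a bipartition. (i) Suppose that for every $\mu\in\operatorname{Rem}^\bullet(\lambda)$ there exists $\nu\in\operatorname{Add}^\circ(\lambda)$ with $D_{\nu,\mu}(\delta)=1$. Then $x_\lambda(\delta)$ has no pair of adjacent vertices $j,j+1$ labelled $(\vee,\wedge)$, $(\bigcirc,\wedge)$, or $(\vee,\times)$. (ii) Suppose that for every $\mu\in\operatorname{Rem}^\circ(\lambda)$ there exists $\nu\in\operatorname{Add}^\bullet(\lambda)$ with $D_{\nu,\mu}(\delta)=1$. Then $x_\lambda(\delta)$ has no pair of adjacent vertices $j,j+1$ labelled $(\vee,\wedge)$, $(\vee,\bigcirc)$, or $(\times,\wedge)$.
   Context: A partition is a weakly decreasing sequence $\alpha=(\alpha_1,\alpha_2,\dots)$ of nonnegative integers, almost all zero. A bipartition is a pair $\lambda=(\lambda^\bullet,\lambda^\circ)$ of partitions. $\operatorname{Add}^\bullet(\lambda)$ (resp. $\operatorname{Add}^\circ(\lambda)$) is the set of bipartitions obtained from $\lambda$ by adding a box to $\lambda^\bullet$ (resp. $\lambda^\circ$). $\operatorname{Rem}^\bullet(\lambda)$ and $\operatorname{Rem}^\circ(\lambda)$ are defined likewise by removing a box. Set $I_\wedge(\lambda)=\{\lambda^\bullet_i-(i-1):i\ge1\}$ and $I_\vee(\lambda,\delta)=\{i-\delta-\lambda^\circ_i:i\ge1\}$. The weight diagram $x_\lambda(\delta)$ labels each integer $j$ by: - $\bigcirc$ if $j$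 is in neither set; - $\wedge$ if $j$ is only in $I_\wedge(\lambda)$; - $\vee$ if $j$ is only in $I_\vee(\lambda,\delta)$; - $\times$ if $j$ is in both. The cap diagram $c_\lambda(\delta)$ is built from $x_\lambda(\delta)$ iteratively. At each step, draw a cap connecting $i<j$ whenever $i$ is labelled $\vee$, $j$ is labelled $\wedge$, and every integer strictly between them is labelled $\bigcirc$ or $\times$ or already lies on an earlier cap. Repeat until no more caps can be drawn. Vertices joined by a cap are connected. $x_\mu(\delta)$ is linked to $x_\lambda(\delta)$ if it is obtained from $x_\lambda(\delta)$ by interchanging labels on finitely many pairs of connected vertices. $D_{\lambda,\mu}(\delta)=1$ if $x_\mu(\delta)$ is linked to $x_\lambda(\delta)$, and $0$ otherwise. *)

theory Defs
  imports Main
begin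

text \<open>Partitions are represented 0-indexed: a function p :: nat => nat with
  alpha_i = p (i - 1) for i >= 1, weakly decreasing and almost all zero.\<close>

type_synonym partition = "nat \<Rightarrow> nat"
type_synonym bipartition = "partition \<times> partition"

definition is_partition :: "partition \<Rightarrow> bool" where
  "is_partition p \<longleftrightarrow> (\<forall>i j. i \<le> j \<longrightarrow> p j \<le> p i) \<and> finite {i. p i \<noteq> 0}"

definition is_bipartition :: "bipartition \<Rightarrow> bool" where
  "is_bipartition lam \<longleftrightarrow> is_partition (fst lam) \<and> is_partition (snd lam)"

definition add_box :: "partition \<Rightarrow> partition set" where
  "add_box p = {q. is_partition q \<and> (\<exists>k. q = p(k := p k + 1))}"

definition rem_box :: "partition \<Rightarrow> partition set" where
  "rem_box p = {q. is_partition q \<and> (\<exists>k. 0 < p k \<and> q = p(k := p k - 1))}"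

definition Add_bullet :: "bipartition \<Rightarrow> bipartition set" where
  "Add_bullet lam = {(a, snd lam) | a. a \<in> add_box (fst lam)}"

definition Add_circ :: "bipartition \<Rightarrow> bipartition set" where
  "Add_circ lam = {(fst lam, b) | b. b \<in> add_box (snd lam)}"

definition Rem_bullet :: "bipartition \<Rightarrow> bipartition set" where
  "Rem_bullet lam = {(a, snd lam) | a. a \<in> rem_box (fst lam)}"

definition Rem_circ :: "bipartition \<Rightarrow> bipartition set" where
  "Rem_circ lam = {(fst lam, b) | b. b \<in> rem_box (snd lam)}"

text \<open>I_wedge(lambda) = { lambda^bullet_i - (i-1) : i >= 1 } (a set of integers);
  with i = k + 1 this is { p k - k }.\<close>
definition I_wedge :: "bipartition \<Rightarrow> int set" where
  "I_wedge lam = {int (fst lam k) - int k | k. True}"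

definition I_vee :: "bipartition \<Rightarrow> 'k::field_char_0 \<Rightarrow> 'k set" where
  "I_vee lam \<delta> = {of_nat (Suc k) - \<delta> - of_nat (snd lam k) | k. True}"

datatype label = Circ | Wedge | Vee | Cross

definition weight_diagram :: "bipartition \<Rightarrow> 'k::field_char_0 \<Rightarrow> int \<Rightarrow> label" where
  "weight_diagram lam \<delta> j =
     (if j \<in> I_wedge lam then (if of_int j \<in> I_vee lam \<delta> then Cross else Wedge)
      else (if of_int j \<in> I_vee lam \<delta> then Vee else Circ))"

definition on_caps :: "(int \<times> int) set \<Rightarrow> int set" where
  "on_caps C = fst ` C \<union> snd ` C"

fun caps_upto :: "(int \<Rightarrow> label) \<Rightarrow> nat \<Rightarrow> (int \<times> int) set" where
  "caps_upto x 0 = {}"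
| "caps_upto x (Suc n) = caps_upto x n \<union>
     {(i, j). i < j \<and> x i = Vee \<and> x j = Wedge
        \<and> i \<notin> on_caps (caps_upto x n) \<and> j \<notin> on_caps (caps_upto x n)
        \<and> (\<forall>k. i < k \<and> k < j \<longrightarrow> x k \<in> {Circ, Cross} \<or> k \<in> on_caps (caps_upto x n))}"

definition caps :: "(int \<Rightarrow> label) \<Rightarrow> (int \<times> int) set" where
  "caps x = (\<Union>n. caps_upto x n)"

definition linked :: "(int \<Rightarrow> label) \<Rightarrow> (int \<Rightarrow> label) \<Rightarrow> bool" where
  "linked x y \<longleftrightarrow> (\<exists>S. finite S \<and> S \<subseteq> caps x
      \<and> (\<forall>(i, j) \<in> S. y i = x j \<and> y j = x i)
      \<and> (\<forall>k. k \<notin> on_caps S \<longrightarrow> y k = x k))"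

definition D :: "bipartition \<Rightarrow> bipartition \<Rightarrow> 'k::field_char_0 \<Rightarrow> nat" where
  "D lam mu \<delta> = (if linked (weight_diagram lam \<delta>) (weight_diagram mu \<delta>) then 1 else 0)"

end

theory Submission
  imports Defs
begin

lemma caps_upto_labels: "(i, j) \<in> caps_upto x n \<Longrightarrow> x i = Vee \<and> x j = Wedge"
  by (induction n) auto

lemma linked_CC:
  assumes "linked x y" "y k = Circ \<or> y k = Cross"
  shows "x k = y k"
proof -
  obtain S where S: "S \<subseteq> caps x" "\<forall>(i, j) \<in> S. y i = x j \<and> y j = x i"
    "\<forall>k. k \<notin> on_caps S \<longrightarrow> y k = x k"
    using assms(1) unfolding linked_def by blast
  show ?thesis
  proof (cases "k \<in> on_caps S")
    case False then show ?thesis using S by simp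
  next
    case True
    then obtain i j where ij: "(i, j) \<in> S" "k = i \<or> k = j" unfolding on_caps_def by force
    then have "(i,j) \<in> caps x" using S by blast
    then have "x i = Vee \<and> x j = Wedge" unfolding caps_def using caps_upto_labels by blast
    then show ?thesis using ij S(2) assms(2) by auto
  qed
qed

lemma part_mono: "is_partition p \<Longrightarrow> i \<le> j \<Longrightarrow> p j \<le> p i"
  unfolding is_partition_def by blast

lemma part_wedge_inj:
  assumes "is_partition p" "int (p i) - int i = int (p k) - int k"
  shows "i = k"
proof (rule ccontr)
  assume "i \<noteq> k"
  then consider "i < k" | "k < i" by linarith
  then show False
  proof cases
    case 1 then have "p k \<le> p i" using part_mono[OF assms(1)] by simp
    then show False using assms(2) 1 by linarith
  next
    case 2 then have "p i \<le> p k" using part_mono[OF assms(1)] by simp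
    then show False using assms(2) 2 by linarith
  qed
qed

lemma part_vee_inj:
  assumes "is_partition p" "int (Suc i) - int (p i) = int (Suc k) - int (p k)"
  shows "i = k"
proof (rule ccontr)
  assume "i \<noteq> k"
  then consider "i < k" | "k < i" by linarith
  then show False
  proof cases
    case 1 then have "p k \<le> p i" using part_mono[OF assms(1)] by simp
    then show False using assms(2) 1 by linarith
  next
    case 2 then have "p i \<le> p k" using part_mono[OF assms(1)] by simp
    then show False using assms(2) 2 by linarith
  qed
qed

lemma rem_partition:
  assumes "is_partition p" "p (Suc k) < p k"
  shows "is_partition (p(k := p k - 1))"
  unfolding is_partition_def
proof
  show "\<forall>i j. i \<le> j \<longrightarrow> (p(k := p k - 1)) j \<le> (p(k := p k - 1)) i"
  proof (intro allI impI)
    fix i j :: nat assume ij: "i \<le> j"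
    show "(p(k := p k - 1)) j \<le> (p(k := p k - 1)) i"
    proof (cases "i = k")
      case True
      then show ?thesis
      proof (cases "j = k")
        case False
        then have "Suc k \<le> j" using ij True by simp
        then have "p j \<le> p (Suc k)" using part_mono[OF assms(1)] by simp
        then show ?thesis using True False assms(2) by simp
      qed simp
    next
      case False
      then show ?thesis using part_mono[OF assms(1) ij] by auto
    qed
  qed
  have "{i. (p(k := p k - 1)) i \<noteq> 0} \<subseteq> {i. p i \<noteq> 0}" by auto
  then show "finite {i. (p(k := p k - 1)) i \<noteq> 0}"
    using assms(1) unfolding is_partition_def by (meson finite_subset)
qed

lemma wd_Cross: "weight_diagram lam \<delta> j = Cross \<Longrightarrow> j \<in> I_wedge lam \<and> of_int j \<in> I_vee lam \<delta>"
  unfolding weight_diagram_def by (auto split: if_splits)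
lemma wd_Circ: "weight_diagram lam \<delta> j = Circ \<Longrightarrow> j \<notin> I_wedge lam \<and> of_int j \<notin> I_vee lam \<delta>"
  unfolding weight_diagram_def by (auto split: if_splits)

lemma wedge_fst: "fst a = fst b \<Longrightarrow> I_wedge a = I_wedge b"
  unfolding I_wedge_def by simp
lemma vee_snd: "snd a = snd b \<Longrightarrow> I_vee a \<delta> = I_vee b \<delta>"
  unfolding I_vee_def by simp

theorem proposition2p5:
  fixes \<delta> :: "'k::field_char_0" and lam :: bipartition
  assumes "is_bipartition lam"
  shows "((\<forall>mu \<in> Rem_bullet lam. \<exists>nu \<in> Add_circ lam. D nu mu \<delta> = 1) \<longrightarrow>
           \<not> (\<exists>j. (weight_diagram lam \<delta> j, weight_diagram lam \<delta> (j + 1))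
                    \<in> {(Vee, Wedge), (Circ, Wedge), (Vee, Cross)}))
       \<and> ((\<forall>mu \<in> Rem_circ lam. \<exists>nu \<in> Add_bullet lam. D nu mu \<delta> = 1) \<longrightarrow>
           \<not> (\<exists>j. (weight_diagram lam \<delta> j, weight_diagram lam \<delta> (j + 1))
                    \<in> {(Vee, Wedge), (Vee, Circ), (Cross, Wedge)}))"
proof -
  obtain p q where lam: "lam = (p, q)" by (cases lam)
  have pp: "is_partition p" and pq: "is_partition q"
    using assms lam unfolding is_bipartition_def by auto
  have part1: "\<not> (\<exists>j. (weight_diagram lam \<delta> j, weight_diagram lam \<delta> (j + 1))
                    \<in> {(Vee, Wedge), (Circ, Wedge), (Vee, Cross)})"
    if H: "\<forall>mu \<in> Rem_bullet lam. \<exists>nu \<in> Add_circ lam. D nu mu \<delta> = 1"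
  proof
    assume "\<exists>j. (weight_diagram lam \<delta> j, weight_diagram lam \<delta> (j + 1))
                    \<in> {(Vee, Wedge), (Circ, Wedge), (Vee, Cross)}"
    then obtain j where j: "(weight_diagram lam \<delta> j, weight_diagram lam \<delta> (j + 1))
                    \<in> {(Vee, Wedge), (Circ, Wedge), (Vee, Cross)}" by blast
    have jw: "j \<notin> I_wedge lam" and j1w: "j+1 \<in> I_wedge lam"
      using j unfolding weight_diagram_def by (auto split: if_splits)
    obtain k where k: "j + 1 = int (p k) - int k" using j1w lam unfolding I_wedge_def by auto
    have lt: "p (Suc k) < p k"
    proof (rule ccontr)
      assume "\<not> p (Suc k) < p k"
      then have "p (Suc k) = p k" using part_mono[OF pp, of k "Suc k"] by simp
      then have "j = int (p (Suc k)) - int (Suc k)" using k by simp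
      then have "j \<in> I_wedge lam" using lam unfolding I_wedge_def by (simp only: fst_conv) blast
      then show False using jw by blast
    qed
    define mu where "mu = (p(k := p k - 1), q)"
    have "mu \<in> Rem_bullet lam" unfolding mu_def Rem_bullet_def rem_box_def lam
      using rem_partition[OF pp lt] lt
      by (auto intro!: exI[of _ k])
    then obtain nu where nu: "nu \<in> Add_circ lam" "D nu mu \<delta> = 1" using H by blast
    have lk: "linked (weight_diagram nu \<delta>) (weight_diagram mu \<delta>)"
      using nu(2) unfolding D_def by (auto split: if_splits)
    have nuw: "I_wedge nu = I_wedge lam"
      using nu(1) unfolding Add_circ_def using wedge_fst[of nu lam] by auto
    have muv: "I_vee mu \<delta> = I_vee lam \<delta>" by (rule vee_snd) (simp add: mu_def lam)
    show False
    proof (cases "weight_diagram lam \<delta> j = Vee")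
      case True
      then have v: "of_int j \<in> I_vee lam \<delta>" unfolding weight_diagram_def by (auto split: if_splits)
      have "j = int (p k - 1) - int k" using k lt by simp
      then have "j \<in> I_wedge mu" unfolding I_wedge_def mu_def by auto
      then have "weight_diagram mu \<delta> j = Cross" using v muv unfolding weight_diagram_def by simp
      then have "weight_diagram nu \<delta> j = Cross" using linked_CC[OF lk] by auto
      then show False using wd_Cross nuw jw by blast
    next
      case False
      then have c: "weight_diagram lam \<delta> j = Circ" "weight_diagram lam \<delta> (j+1) = Wedge" using j by auto
      have nv: "of_int (j+1) \<notin> I_vee lam \<delta>" using c(2) unfolding weight_diagram_def by (auto split: if_splits)
      have "j+1 \<notin> I_wedge mu"
      proof
        assume "j+1 \<in> I_wedge mu"
        then obtain i where i: "j+1 = int ((p(k := p k - 1)) i) - int i"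
          unfolding I_wedge_def mu_def by auto
        show False
        proof (cases "i = k")
          case True then show False using i k lt by simp
        next
          case False
          then have "int (p i) - int i = int (p k) - int k" using i k by simp
          then show False using part_wedge_inj[OF pp] False by blast
        qed
      qed
      then have "weight_diagram mu \<delta> (j+1) = Circ" using nv muv unfolding weight_diagram_def by simp
      then have "weight_diagram nu \<delta> (j+1) = Circ" using linked_CC[OF lk] by auto
      then show False using wd_Circ nuw j1w by blast
    qed
  qed
  have part2: "\<not> (\<exists>j. (weight_diagram lam \<delta> j, weight_diagram lam \<delta> (j + 1))
                    \<in> {(Vee, Wedge), (Vee, Circ), (Cross, Wedge)})"
    if H: "\<forall>mu \<in> Rem_circ lam. \<exists>nu \<in> Add_bullet lam. D nu mu \<delta> = 1"
  proof
    assume "\<exists>j. (weight_diagram lam \<delta> j, weight_diagram lam \<delta> (j + 1))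
                    \<in> {(Vee, Wedge), (Vee, Circ), (Cross, Wedge)}"
    then obtain j where j: "(weight_diagram lam \<delta> j, weight_diagram lam \<delta> (j + 1))
                    \<in> {(Vee, Wedge), (Vee, Circ), (Cross, Wedge)}" by blast
    have jv: "of_int j \<in> I_vee lam \<delta>" and j1v: "of_int (j+1) \<notin> I_vee lam \<delta>"
      using j unfolding weight_diagram_def by (auto split: if_splits)
    obtain k where k: "of_int j = (of_nat (Suc k) - \<delta> - of_nat (q k) :: 'k)"
      using jv lam unfolding I_vee_def by auto
    have lt: "q (Suc k) < q k"
    proof (rule ccontr)
      assume "\<not> q (Suc k) < q k"
      then have "q (Suc k) = q k" using part_mono[OF pq, of k "Suc k"] by simp
      then have "of_int (j+1) = (of_nat (Suc (Suc k)) - \<delta> - of_nat (q (Suc k)) :: 'k)"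
        using k by simp
      then have "of_int (j+1) \<in> I_vee lam \<delta>" using lam unfolding I_vee_def by (simp only: snd_conv) blast
      then show False using j1v by blast
    qed
    define mu where "mu = (p, q(k := q k - 1))"
    have "mu \<in> Rem_circ lam" unfolding mu_def Rem_circ_def rem_box_def lam
      using rem_partition[OF pq lt] lt
      by (auto intro!: exI[of _ k])
    then obtain nu where nu: "nu \<in> Add_bullet lam" "D nu mu \<delta> = 1" using H by blast
    have lk: "linked (weight_diagram nu \<delta>) (weight_diagram mu \<delta>)"
      using nu(2) unfolding D_def by (auto split: if_splits)
    have nuv: "I_vee nu \<delta> = I_vee lam \<delta>"
      using nu(1) unfolding Add_bullet_def using vee_snd[of nu lam \<delta>] by auto
    have muw: "I_wedge mu = I_wedge lam" by (rule wedge_fst) (simp add: mu_def lam)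
    show False
    proof (cases "weight_diagram lam \<delta> (j+1) = Wedge")
      case True
      then have w: "j+1 \<in> I_wedge lam" unfolding weight_diagram_def by (auto split: if_splits)
      have "of_int (j+1) = (of_nat (Suc k) - \<delta> - of_nat (q k - 1) :: 'k)"
        using k lt by (simp add: of_nat_diff)
      then have "of_int (j+1) \<in> I_vee mu \<delta>" unfolding I_vee_def mu_def by auto
      then have "weight_diagram mu \<delta> (j+1) = Cross" using w muw unfolding weight_diagram_def by simp
      then have "weight_diagram nu \<delta> (j+1) = Cross" using linked_CC[OF lk] by auto
      then show False using wd_Cross nuv j1v by blast
    next
      case False
      then have c: "weight_diagram lam \<delta> j = Vee" using j by auto
      have nw: "j \<notin> I_wedge lam" using c unfolding weight_diagram_def by (auto split: if_splits)
      have "of_int j \<notin> I_vee mu \<delta>"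
      proof
        assume "of_int j \<in> I_vee mu \<delta>"
        then obtain i where i: "of_int j = (of_nat (Suc i) - \<delta> - of_nat ((q(k := q k - 1)) i) :: 'k)"
          unfolding I_vee_def mu_def by auto
        show False
        proof (cases "i = k")
          case True then show False using i k lt by (simp add: of_nat_diff)
        next
          case False
          then have "(of_nat (Suc i) - of_nat (q i) :: 'k) = of_nat (Suc k) - of_nat (q k)"
            using i k by simp
          then have "(of_int (int (Suc i) - int (q i)) :: 'k) = of_int (int (Suc k) - int (q k))"
            by simp
          then have "int (Suc i) - int (q i) = int (Suc k) - int (q k)" using of_int_eq_iff by blast
          then show False using part_vee_inj[OF pq] False by blast
        qed
      qed
      then have "weight_diagram mu \<delta> j = Circ" using nw muw unfolding weight_diagram_def by simp
      then have "weight_diagram nu \<delta> j = Circ" using linked_CC[OF lk] by auto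
      then show False using wd_Circ nuv jv by blast
    qed
  qed
  show ?thesis using part1 part2 by blast
qed

end
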